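(* Let $\nu>0$, $b>0$ and let $f:\mathbb{R}\to\mathbb{R}$ be continuously differentiable with: $f(0)=f(a)=f(1)=0$ for some $a\in(0,1)$; $f<0$ on $(0,a)$, $f>0$ on $(a,1)$; $f'(0)<0$, $f'(a)>0$, $f'(1)<0$; $\int_0^1 f(v)\,dv\ge 0$; and there exists $v_\ast\in(a,1)$ such that $f''(v)>0$ for $v\in[0,v_\ast)$ and $f''(v)<0$ for $v\in(v_\ast,1]$. Let $\hat v:\mathbb{R}\to\mathbb{R}$ be a monotone increasing $C^2$ function with $\hat v(-\infty)=0$, $\hat v(+\infty)=1$, satisfying $c\hat v_x=\nu\hat v_{xx}+bf(\hat v)$ for some constant $c\in\mathbb{R}$. Then: (i) $\frac{f(\hat v)}{\hat v_x}$ is strictly monotone increasing on $\mathbb{R}$; in particular $-\frac{d^2}{dx^2}\log\hat v_x=-\frac{d}{dx}\frac{\hat v_{xx}}{\hat v_x}=\frac{b}{\nu}\frac{d}{dx}\frac{f(\hat v)}{\hat v_x}>0$, i.e. $\hat v_x$ is strictly log-concave. (ii) $\gamma_-:=\inf_{x\in\mathbb{R}}\frac{b}{\nu}\frac{f(\hat v)}{\hat v_x}(x)=\frac{c}{2\nu}-\sqrt{\left(\frac{c}{2\nu}\right)^2-\frac{b}{\nu}f'(0)}$ and $\gamma_+:=\sup_{x\in\mathbb{R}}\frac{b}{\nu}\frac{f(\hat v)}{\hat v_x}(x)=\frac{c}{2\nu}+\sqrt{\left(\frac{c}{2\nu}\right)^2-\frac{b}{\nu}f'(1)}$. (iii) $\int_{-\infty}^0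 e^{-2\alpha\frac{c}{\nu}x}(\hat v_x^2+\hat v_{xx}^2)\,dx<\infty$ for all $\alpha\in\mathbb{R}$ with $\alpha\frac{c}{\nu}<\frac{c}{\nu}-\gamma_-$, and $\int_0^{\infty} e^{-2\alpha\frac{c}{\nu}x}(\hat v_x^2+\hat v_{xx}^2)\,dx<\infty$ for all $\alpha\in\mathbb{R}$ with $\alpha\frac{c}{\nu}>\frac{c}{\nu}-\gamma_+$. In particular $\int_{\mathbb{R}}e^{-\frac{c}{\nu}x}(\hat v_x^2+\hat v_{xx}^2)\,dx<\infty$.
   Context: $\hat v$ is a travelling wave (with wave speed $c$, which is $\ge 0$ under $\int_0^1 f\ge 0$) of $\partial_t v=\nu v_{xx}+bf(v)$; the assumption on $f''$ includes that $f$ is twice differentiable on $[0,1]$. *)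

theory Defs
  imports "HOL-Analysis.Analysis"
begin

end

theory Submission
  imports Defs
begin


lemma gronwall_zero:
  fixes E E' :: "real \<Rightarrow> real"
  assumes der: "\<And>x. (E has_real_derivative E' x) (at x)"
    and bnd: "\<And>x. \<bar>E' x\<bar> \<le> K * E x"
    and nn: "\<And>x. E x \<ge> 0"
    and z: "E x0 = 0"
  shows "E x = 0"
proof (cases "x0 \<le> x")
  case True
  have "E x * exp (- K * x) \<le> E x0 * exp (- K * x0)"
  proof (rule DERIV_nonpos_imp_nonincreasing[OF True])
    fix t assume "x0 \<le> t" "t \<le> x"
    show "\<exists>y. ((\<lambda>t. E t * exp (- K * t)) has_real_derivative y) (at t) \<and> y \<le> 0"
      apply (rule exI[of _ "(E' t - K * E t) * exp (- K * t)"])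
      apply (intro conjI)
       apply (rule derivative_eq_intros der refl | simp)+
       apply (simp add: algebra_simps)
      using bnd[of t] by (intro mult_nonpos_nonneg) auto
  qed
  then have "E x * exp (- K * x) \<le> 0" using z by simp
  then have "E x \<le> 0" by (simp add: mult_le_0_iff)
  then show ?thesis using nn[of x] by linarith
next
  case False
  then have le: "x \<le> x0" by simp
  have "E x * exp (K * x) \<le> E x0 * exp (K * x0)"
  proof (rule DERIV_nonneg_imp_nondecreasing[OF le])
    fix t assume "x \<le> t" "t \<le> x0"
    show "\<exists>y. ((\<lambda>t. E t * exp (K * t)) has_real_derivative y) (at t) \<and> y \<ge> 0"
      apply (rule exI[of _ "(E' t + K * E t) * exp (K * t)"])
      apply (intro conjI)
       apply (rule derivative_eq_intros der refl | simp)+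
       apply (simp add: algebra_simps)
      using bnd[of t] by (intro mult_nonneg_nonneg) auto
  qed
  then have "E x * exp (K * x) \<le> 0" using z by simp
  then have "E x \<le> 0" by (simp add: mult_le_0_iff)
  then show ?thesis using nn[of x] by linarith
qed

lemma lin_ode_sign:
  fixes w A h :: "real \<Rightarrow> real"
  assumes yx: "y < z"
    and der: "\<And>t. (w has_real_derivative (A t * w t + h t)) (at t)"
    and Ac: "continuous_on UNIV A"
    and hpos: "\<And>t. y < t \<Longrightarrow> t < z \<Longrightarrow> h t > 0"
    and w0: "w z \<le> 0"
  shows "w y < 0"
proof -
  define F where "F x = integral {y..x} A" for x
  have Fd: "(F has_real_derivative A t) (at t within {y..z})" if "t \<in> {y..z}" for t
    unfolding F_def using integral_has_real_derivative[OF continuous_on_subset[OF Ac] that] by auto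
  have Fd': "(F has_real_derivative A t) (at t)" if "y < t" "t < z" for t
  proof -
    have "(F has_real_derivative A t) (at t within {y<..<z})"
      by (rule DERIV_subset[OF Fd]) (use that in auto)
    moreover have "at t within {y<..<z} = at t"
      by (rule at_within_open) (use that in auto)
    ultimately show ?thesis by simp
  qed
  have wc: "continuous_on {y..z} w"
    by (rule DERIV_continuous_on, rule has_field_derivative_at_within, rule der)
  have Fc: "continuous_on {y..z} F"
    by (rule DERIV_continuous_on, rule Fd)
  have "w y * exp (- F y) < w z * exp (- F z)"
  proof (rule DERIV_pos_imp_increasing_open[OF yx])
    fix t assume t: "y < t" "t < z"
    have e: "((\<lambda>t. exp (- F t)) has_real_derivative exp (- F t) * (- A t)) (at t)"
      by (rule DERIV_fun_exp, rule DERIV_minus, rule Fd'[OF t])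
    have "((\<lambda>t. w t * exp (- F t)) has_real_derivative (A t * w t + h t) * exp (- F t) + exp (- F t) * (- A t) * w t) (at t)"
      by (rule DERIV_mult[OF der e])
    moreover have "(A t * w t + h t) * exp (- F t) + exp (- F t) * (- A t) * w t = h t * exp (- F t)"
      by (simp add: algebra_simps)
    moreover have "h t * exp (- F t) > 0" using hpos[OF t] by simp
    ultimately show "\<exists>d. ((\<lambda>t. w t * exp (- F t)) has_real_derivative d) (at t) \<and> d > 0"
      by metis
  next
    show "continuous_on {y..z} (\<lambda>t. w t * exp (- F t))"
      by (intro continuous_intros wc Fc)
  qed
  also have "\<dots> \<le> 0" using w0 by (simp add: mult_le_0_iff)
  finally show ?thesis by (simp add: mult_less_0_iff)
qed

lemma deriv_lim_zero_top:
  fixes r r' :: "real \<Rightarrow> real"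
  assumes der: "\<And>x. (r has_real_derivative r' x) (at x)"
    and lr: "(r \<longlongrightarrow> L) at_top" and lr': "(r' \<longlongrightarrow> m) at_top"
  shows "m = 0"
proof -
  have sh: "((\<lambda>x. r (x + 1)) \<longlongrightarrow> L) at_top"
    by (rule filterlim_compose[OF lr]) (subst add.commute, rule filterlim_tendsto_add_at_top[OF tendsto_const filterlim_ident])
  have d0: "((\<lambda>x. r (x + 1) - r x) \<longlongrightarrow> 0) at_top"
    using tendsto_diff[OF sh lr] by simp
  have mvt: "\<exists>z. x < z \<and> r (x + 1) - r x = r' z" for x
    using MVT2[of x "x+1" r r'] der by force
  show ?thesis
  proof (rule ccontr)
    assume "m \<noteq> 0"
    then have "0 < \<bar>m\<bar> / 2" by simp
    from order_tendstoD(1)[OF lr', of "m - \<bar>m\<bar>/2"] order_tendstoD(2)[OF lr', of "m + \<bar>m\<bar>/2"] this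
    have ev: "eventually (\<lambda>x. m - \<bar>m\<bar>/2 < r' x \<and> r' x < m + \<bar>m\<bar>/2) at_top"
      by (auto intro: eventually_conj)
    then obtain X where X: "\<And>x. x \<ge> X \<Longrightarrow> m - \<bar>m\<bar>/2 < r' x \<and> r' x < m + \<bar>m\<bar>/2"
      by (auto simp: eventually_at_top_linorder)
    have ev2: "eventually (\<lambda>x. m - \<bar>m\<bar>/2 < r (x+1) - r x \<and> r (x+1) - r x < m + \<bar>m\<bar>/2) at_top"
      unfolding eventually_at_top_linorder
    proof (rule exI[of _ X], intro allI impI)
      fix x assume "x \<ge> X"
      obtain z where "x < z" "r (x + 1) - r x = r' z" using mvt by blast
      then show "m - \<bar>m\<bar>/2 < r (x+1) - r x \<and> r (x+1) - r x < m + \<bar>m\<bar>/2"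
        using X[of z] \<open>x \<ge> X\<close> by simp
    qed
    show False
    proof (cases "m > 0")
      case True
      have "m - \<bar>m\<bar>/2 \<le> 0"
        by (rule tendsto_lowerbound[OF d0]) (use ev2 in \<open>auto elim: eventually_mono\<close>)
      then show False using True by simp
    next
      case False
      with \<open>m \<noteq> 0\<close> have "m < 0" by simp
      have "m + \<bar>m\<bar>/2 \<ge> 0"
        by (rule tendsto_upperbound[OF d0]) (use ev2 in \<open>auto elim: eventually_mono\<close>)
      then show False using \<open>m < 0\<close> by simp
    qed
  qed
qed

lemma deriv_lim_zero_bot:
  fixes r r' :: "real \<Rightarrow> real"
  assumes der: "\<And>x. (r has_real_derivative r' x) (at x)"
    and lr: "(r \<longlongrightarrow> L) at_bot" and lr': "(r' \<longlongrightarrow> m) at_bot"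
  shows "m = 0"
proof -
  have "- m = 0"
  proof (rule deriv_lim_zero_top)
    show "((\<lambda>x. r (- x)) has_real_derivative - r' (- x)) (at x)" for x
      using der[of "-x"] DERIV_mirror by blast
    show "((\<lambda>x. r (- x)) \<longlongrightarrow> L) at_top"
      using lr by (simp add: filterlim_at_bot_mirror)
    show "((\<lambda>x. - r' (- x)) \<longlongrightarrow> - m) at_top"
      using lr' by (intro tendsto_minus) (simp add: filterlim_at_bot_mirror)
  qed
  then show ?thesis by simp
qed

lemma mono_conv_bot:
  fixes r :: "real \<Rightarrow> real"
  assumes mono: "\<And>x y. x \<le> y \<Longrightarrow> y \<le> x0 \<Longrightarrow> r x \<le> r y"
    and bd: "\<And>x. x \<le> x0 \<Longrightarrow> B \<le> r x"
  shows "\<exists>L. (r \<longlongrightarrow> L) at_bot"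
proof -
  define L where "L = Inf (r ` {..x0})"
  have bdd: "bdd_below (r ` {..x0})" by (rule bdd_belowI2[of _ B]) (use bd in auto)
  have ne: "r ` {..x0} \<noteq> {}" by auto
  have "(r \<longlongrightarrow> L) at_bot"
  proof (rule decreasing_tendsto)
    show "eventually (\<lambda>n. L \<le> r n) at_bot"
      unfolding eventually_at_bot_linorder L_def
      by (rule exI[of _ x0]) (auto intro: cInf_lower bdd)
  next
    fix x assume "L < x"
    then obtain n where n: "n \<le> x0" "r n < x"
      using cInf_less_iff[OF ne bdd] unfolding L_def by auto
    show "eventually (\<lambda>m. r m < x) at_bot"
      unfolding eventually_at_bot_linorder
      by (rule exI[of _ n]) (use n mono in \<open>fastforce\<close>)
  qed
  then show ?thesis by blast
qed

lemma mono_conv_bot':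
  fixes r :: "real \<Rightarrow> real"
  assumes mono: "\<And>x y. x \<le> y \<Longrightarrow> y \<le> x0 \<Longrightarrow> r y \<le> r x"
    and bd: "\<And>x. x \<le> x0 \<Longrightarrow> r x \<le> B"
  shows "\<exists>L. (r \<longlongrightarrow> L) at_bot"
proof -
  obtain L where "((\<lambda>x. - r x) \<longlongrightarrow> L) at_bot"
    using mono_conv_bot[of x0 "\<lambda>x. - r x" "-B"] mono bd by force
  then have "((\<lambda>x. - (- r x)) \<longlongrightarrow> - L) at_bot" by (rule tendsto_minus)
  then show ?thesis by auto
qed

lemma mono_conv_top:
  fixes r :: "real \<Rightarrow> real"
  assumes mono: "\<And>x y. x0 \<le> x \<Longrightarrow> x \<le> y \<Longrightarrow> r x \<le> r y"
    and bd: "\<And>x. x0 \<le> x \<Longrightarrow> r x \<le> B"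
  shows "\<exists>L. (r \<longlongrightarrow> L) at_top"
proof -
  obtain L where "((\<lambda>x. r (- x)) \<longlongrightarrow> L) at_bot"
    using mono_conv_bot'[of "-x0" "\<lambda>x. r (- x)" B] mono bd by force
  then show ?thesis by (auto simp: filterlim_at_top_mirror)
qed

lemma mono_conv_top':
  fixes r :: "real \<Rightarrow> real"
  assumes mono: "\<And>x y. x0 \<le> x \<Longrightarrow> x \<le> y \<Longrightarrow> r y \<le> r x"
    and bd: "\<And>x. x0 \<le> x \<Longrightarrow> B \<le> r x"
  shows "\<exists>L. (r \<longlongrightarrow> L) at_top"
proof -
  obtain L where "((\<lambda>x. r (- x)) \<longlongrightarrow> L) at_bot"
    using mono_conv_bot[of "-x0" "\<lambda>x. r (- x)" B] mono bd by force
  then show ?thesis by (auto simp: filterlim_at_top_mirror)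
qed

lemma blowup_bot:
  fixes r r' :: "real \<Rightarrow> real"
  assumes der: "\<And>x. (r has_real_derivative r' x) (at x)"
    and inc: "\<And>x. r' x > 0"
    and big: "\<And>x. r x \<le> - R \<Longrightarrow> r' x \<ge> (r x)\<^sup>2 / 2"
    and R: "R > 0"
  shows "r x \<ge> - R"
proof (rule ccontr)
  assume "\<not> r x \<ge> - R"
  then have x1: "r x < - R" by simp
  have le: "r t < - R" if "t \<le> x" for t
  proof -
    have "r t \<le> r x"
      by (rule DERIV_nonneg_imp_nondecreasing[OF that]) (use der inc less_imp_le in blast)
    then show ?thesis using x1 by simp
  qed
  define y where "y = x + 2 / r x - 1"
  have rx: "r x < 0" using x1 R by simp
  have yx: "y \<le> x" unfolding y_def using rx by (simp add: divide_neg_pos)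
  have "(\<lambda>t. inverse (r t) + t / 2) x \<le> (\<lambda>t. inverse (r t) + t / 2) y"
  proof (rule DERIV_nonpos_imp_nonincreasing[OF yx])
    fix t assume t: "y \<le> t" "t \<le> x"
    have rt: "r t < - R" using le t by simp
    then have rt0: "r t \<noteq> 0" using R by simp
    have d: "((\<lambda>t. inverse (r t) + t / 2) has_real_derivative (- (r' t * inverse (r t ^ Suc (Suc 0)))) + 1 / 2) (at t)"
      by (rule DERIV_add[OF DERIV_inverse_fun[OF der rt0] DERIV_cdivide[OF DERIV_ident]])
    have "r' t \<ge> (r t)\<^sup>2 / 2" using big rt by simp
    moreover have "(r t)\<^sup>2 > 0" using rt0 by simp
    ultimately have "r' t * inverse (r t ^ Suc (Suc 0)) \<ge> 1 / 2"
      by (simp add: field_simps power2_eq_square)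
    then have "(- (r' t * inverse (r t ^ Suc (Suc 0)))) + 1 / 2 \<le> 0" by linarith
    then show "\<exists>d. ((\<lambda>t. inverse (r t) + t / 2) has_real_derivative d) (at t) \<and> d \<le> 0"
      using d by blast
  qed
  then have "inverse (r x) + x / 2 \<le> inverse (r y) + y / 2" by simp
  then have "inverse (r y) \<ge> 1 / 2" unfolding y_def by (simp add: field_simps inverse_eq_divide)
  moreover have "r y < 0" using le[OF yx] R by simp
  ultimately show False by (simp add: inverse_eq_divide divide_less_0_iff)
qed

lemma blowup_top:
  fixes r r' :: "real \<Rightarrow> real"
  assumes der: "\<And>x. (r has_real_derivative r' x) (at x)"
    and inc: "\<And>x. r' x > 0"
    and big: "\<And>x. r x \<ge> R \<Longrightarrow> r' x \<ge> (r x)\<^sup>2 / 2"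
    and R: "R > 0"
  shows "r x \<le> R"
proof -
  have "- r (- (- x)) \<ge> - R"
  proof (rule blowup_bot[where r="\<lambda>t. - r (- t)" and r' = "\<lambda>t. r' (- t)" and x="-x"])
    show "((\<lambda>t. - r (- t)) has_real_derivative r' (- t)) (at t)" for t
    proof -
      have "((\<lambda>t. r (- t)) has_real_derivative - r' (- t)) (at t)"
        using der[of "-t"] DERIV_mirror[where f=r and x=t and y="r' (-t)"] by simp
      from DERIV_minus[OF this] show ?thesis by simp
    qed
    show "r' (- t) > 0" for t by (rule inc)
    show "r' (- t) \<ge> (- r (- t))\<^sup>2 / 2" if "- r (- t) \<le> - R" for t
      using big[of "-t"] that by simp
  qed (use R in auto)
  then show ?thesis by simp
qed

lemma integrable_exp_bound_top:
  fixes F :: "real \<Rightarrow> real"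
  assumes cont: "continuous_on UNIV F"
    and bnd: "\<And>x. x \<ge> xb \<Longrightarrow> \<bar>F x\<bar> \<le> C * exp (- e * x)"
    and e: "e > 0"
  shows "F integrable_on {0..}"
proof -
  define x2 where "x2 = max xb 0"
  have i1: "F integrable_on {0..x2}"
    by (rule integrable_continuous_interval, rule continuous_on_subset[OF cont]) auto
  have g: "(\<lambda>x. C * exp (- e * x)) integrable_on {x2..}"
    using integrable_on_cmult_left[OF integrable_on_exp_minus_to_infinity[OF e, of x2], of C] by simp
  have i2: "F integrable_on {x2..}"
  proof (rule measurable_bounded_by_integrable_imp_integrable)
    show "(\<lambda>x. C * exp (- e * x)) integrable_on {x2..}" by (rule g)
    show "F \<in> borel_measurable (lebesgue_on {x2..})"
      by (rule continuous_imp_measurable_on_sets_lebesgue, rule continuous_on_subset[OF cont]) auto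
    show "{x2..} \<in> sets lebesgue" by simp
    show "norm (F x) \<le> C * exp (- e * x)" if "x \<in> {x2..}" for x
      using bnd[of x] that unfolding x2_def by simp
  qed
  show ?thesis
  proof (rule integrable_Un'[OF i1 i2])
    have "{0..x2} \<inter> {x2..} = {x2}" using \<open>x2 = max xb 0\<close> by auto
    then show "negligible ({0..x2} \<inter> {x2..})" by simp
    show "{0..} = {0..x2} \<union> {x2..}" using \<open>x2 = max xb 0\<close> by auto
  qed
qed

lemma has_integral_reflect_UNIV:
  fixes f :: "real \<Rightarrow> real"
  assumes "((\<lambda>x. f (- x)) has_integral i) UNIV"
  shows "(f has_integral i) UNIV"
proof -
  from assms[unfolded has_integral_alt'] have
    A: "\<And>a b. (\<lambda>x. f (- x)) integrable_on cbox a b" and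
    B: "\<And>e. e > 0 \<Longrightarrow> \<exists>B>0. \<forall>a b. ball 0 B \<subseteq> cbox a b \<longrightarrow> norm (integral (cbox a b) (\<lambda>x. f (- x)) - i) < e"
    by auto
  show ?thesis unfolding has_integral_alt'
  proof (intro conjI allI impI)
    fix a b :: real
    have "(\<lambda>x. f (- x)) integrable_on {-b..-a}" using A[of "-b" "-a"] by simp
    then have "f integrable_on {a..b}" using Henstock_Kurzweil_Integration.integrable_reflect_real by blast
    then show "(\<lambda>x. if x \<in> UNIV then f x else 0) integrable_on cbox a b" by simp
  next
    fix e :: real assume "e > 0"
    then obtain B where B0: "B > 0" and BB: "\<forall>a b. ball 0 B \<subseteq> cbox a b \<longrightarrow> norm (integral (cbox a b) (\<lambda>x. f (- x)) - i) < e"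
      using B by blast
    show "\<exists>B>0. \<forall>a b. ball 0 B \<subseteq> cbox a b \<longrightarrow> norm (integral (cbox a b) (\<lambda>x. if x \<in> UNIV then f x else 0) - i) < e"
    proof (intro exI[of _ B] conjI allI impI B0)
      fix a b :: real assume sub: "ball 0 B \<subseteq> cbox a b"
      have sub': "ball 0 B \<subseteq> cbox (-b) (-a)"
      proof
        fix x :: real assume "x \<in> ball 0 B"
        then have "-x \<in> ball 0 B" by (simp add: dist_norm)
        then have "-x \<in> cbox a b" using sub by blast
        then show "x \<in> cbox (-b) (-a)" by auto
      qed
      have "integral (cbox (-b) (-a)) (\<lambda>x. f (- x)) = integral (cbox a b) f"
      proof (cases "f integrable_on cbox a b")
        case True
        then have "(f has_integral integral (cbox a b) f) (cbox a b)" by (rule integrable_integral)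
        then have "((\<lambda>x. f (- x)) has_integral integral (cbox a b) f) (cbox (-b) (-a))"
          by (simp only: has_integral_reflect)
        then show ?thesis by (rule integral_unique)
      next
        case False
        then have "\<not> (\<lambda>x. f (- x)) integrable_on cbox (-b) (-a)" by simp
        then show ?thesis using False by (simp add: not_integrable_integral)
      qed
      moreover have "norm (integral (cbox (-b) (-a)) (\<lambda>x. f (- x)) - i) < e"
        using BB sub' by blast
      ultimately show "norm (integral (cbox a b) (\<lambda>x. if x \<in> UNIV then f x else 0) - i) < e"
        by simp
    qed
  qed
qed

lemma integrable_reflect_half:
  fixes F :: "real \<Rightarrow> real"
  assumes "(\<lambda>x. F (- x)) integrable_on {0..}"
  shows "F integrable_on {..0}"
proof -
  have "(\<lambda>x. if x \<in> {0..} then F (- x) else 0) integrable_on UNIV"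
    using assms by (simp only: Henstock_Kurzweil_Integration.integrable_restrict_UNIV)
  then obtain i where i: "((\<lambda>x. if x \<in> {0..} then F (- x) else 0) has_integral i) UNIV"
    unfolding integrable_on_def by blast
  have eq: "(\<lambda>x. if x \<in> {0..} then F (- x) else 0) = (\<lambda>x. (\<lambda>y. if y \<in> {..0} then F y else 0) (- x))"
    by (rule ext) simp
  have "((\<lambda>x. (\<lambda>y. if y \<in> {..0} then F y else 0) (- x)) has_integral i) UNIV"
    using i unfolding eq .
  then have "((\<lambda>y. if y \<in> {..0} then F y else 0) has_integral i) UNIV"
    by (rule has_integral_reflect_UNIV)
  then have "(\<lambda>y. if y \<in> {..0} then F y else 0) integrable_on UNIV"
    unfolding integrable_on_def by blast
  then show ?thesis by (simp only: Henstock_Kurzweil_Integration.integrable_restrict_UNIV)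
qed


lemma lin_ode_sign_right:
  fixes w A h :: "real \<Rightarrow> real"
  assumes yx: "x0 < y"
    and der: "\<And>t. (w has_real_derivative (A t * w t + h t)) (at t)"
    and Ac: "continuous_on UNIV A"
    and hneg: "\<And>t. x0 < t \<Longrightarrow> t < y \<Longrightarrow> h t < 0"
    and w0: "w x0 \<le> 0"
  shows "w y < 0"
proof -
  have "w (- (- y)) < 0"
  proof (rule lin_ode_sign[where w="\<lambda>t. w (- t)" and y="- y" and A="\<lambda>t. - A (- t)" and h="\<lambda>t. - h (- t)" and z="- x0"])
    show "- y < - x0" using yx by simp
    show "((\<lambda>t. w (- t)) has_real_derivative (- A (- t) * w (- t) + - h (- t))) (at t)" for t
    proof -
      have "((\<lambda>t. w (- t)) has_real_derivative - (A (- t) * w (- t) + h (- t))) (at t)"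
        using der[of "-t"] DERIV_mirror[where f=w and x=t and y="A (- t) * w (- t) + h (- t)"] by simp
      then show ?thesis by (simp add: algebra_simps)
    qed
    show "continuous_on UNIV (\<lambda>t. - A (- t))"
      by (intro continuous_intros continuous_on_compose2[OF Ac]) auto
    show "- h (- t) > 0" if "- y < t" "t < - x0" for t
      using hneg[of "-t"] that by simp
    show "w (- (- x0)) \<le> 0" using w0 by simp
  qed
  then show ?thesis by simp
qed



locale tw =
  fixes \<nu> b a vs c :: real
    and f f1 f2 :: "real \<Rightarrow> real"
    and vh v1 v2 :: "real \<Rightarrow> real"
  assumes nu_pos: "\<nu> > 0" and b_pos: "b > 0"
    and f_deriv: "\<And>x. (f has_real_derivative f1 x) (at x)"
    and f1_cont: "continuous_on UNIV f1"
    and f2_deriv: "\<And>v. v \<in> {0..1} \<Longrightarrow> (f1 has_real_derivative f2 v) (at v within {0..1})"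
    and a_in: "0 < a" "a < 1"
    and f_zeros: "f 0 = 0" "f a = 0" "f 1 = 0"
    and f_neg: "\<And>v. v \<in> {0<..<a} \<Longrightarrow> f v < 0"
    and f_pos: "\<And>v. v \<in> {a<..<1} \<Longrightarrow> f v > 0"
    and f1_signs: "f1 0 < 0" "f1 1 < 0"
    and vs_in: "a < vs" "vs < 1"
    and f2_pos: "\<And>v. v \<in> {0..<vs} \<Longrightarrow> f2 v > 0"
    and f2_neg: "\<And>v. v \<in> {vs<..1} \<Longrightarrow> f2 v < 0"
    and vh_mono: "mono vh"
    and vh_deriv: "\<And>x. (vh has_real_derivative v1 x) (at x)"
    and v1_deriv: "\<And>x. (v1 has_real_derivative v2 x) (at x)"
    and v2_cont: "continuous_on UNIV v2"
    and vh_bot: "(vh \<longlongrightarrow> 0) at_bot"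
    and vh_top: "(vh \<longlongrightarrow> 1) at_top"
    and tw: "\<And>x. c * v1 x = \<nu> * v2 x + b * f (vh x)"
begin

lemma vh_ge0: "0 \<le> vh x"
proof (rule tendsto_upperbound[OF vh_bot])
  show "eventually (\<lambda>y. vh y \<le> vh x) at_bot"
    unfolding eventually_at_bot_linorder using vh_mono by (auto intro!: exI[of _ x] dest: monoD)
qed simp

lemma vh_le1: "vh x \<le> 1"
proof (rule tendsto_lowerbound[OF vh_top])
  show "eventually (\<lambda>y. vh x \<le> vh y) at_top"
    unfolding eventually_at_top_linorder using vh_mono by (auto intro!: exI[of _ x] dest: monoD)
qed simp

lemma v1_nonneg: "v1 x \<ge> 0"
proof (rule ccontr)
  assume "\<not> v1 x \<ge> 0"
  then have "v1 x < 0" by simp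
  from DERIV_neg_dec_right[OF vh_deriv this] obtain d where d: "d > 0" "\<forall>h>0. h < d \<longrightarrow> vh x > vh (x + h)"
    by blast
  then have "vh x > vh (x + d/2)" by simp
  moreover have "vh x \<le> vh (x + d/2)" by (rule monoD[OF vh_mono]) (use d in simp)
  ultimately show False by simp
qed

lemma f1_bound: obtains M where "M \<ge> 0" "\<And>y. y \<in> {0..1} \<Longrightarrow> \<bar>f1 y\<bar> \<le> M"
proof -
  have "compact (f1 ` {0..1})"
    by (rule compact_continuous_image[OF continuous_on_subset[OF f1_cont]]) auto
  then obtain M where "\<forall>z\<in>f1 ` {0..1}. norm z \<le> M"
    using compact_imp_bounded bounded_iff by metis
  then have M: "\<And>y. y \<in> {0..1} \<Longrightarrow> \<bar>f1 y\<bar> \<le> M" by auto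
  moreover have "M \<ge> 0" using M[of 0] by simp
  ultimately show ?thesis using that by blast
qed

lemma f_lip: obtains L where "L \<ge> 0" "\<And>u z. u \<in> {0..1} \<Longrightarrow> z \<in> {0..1} \<Longrightarrow> \<bar>f u - f z\<bar> \<le> L * \<bar>u - z\<bar>"
proof -
  obtain M where M0: "M \<ge> 0" and M: "\<And>y. y \<in> {0..1} \<Longrightarrow> \<bar>f1 y\<bar> \<le> M"
    using f1_bound by blast
  have lt: "\<bar>f u - f z\<bar> \<le> M * \<bar>u - z\<bar>" if "u \<in> {0..1}" "z \<in> {0..1}" "u < z" for u z
  proof -
    obtain t where t: "u < t" "t < z" "f z - f u = (z - u) * f1 t"
      using MVT2[OF \<open>u < z\<close>, of f f1] f_deriv by blast
    have "t \<in> {0..1}" using t that by auto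
    then have "\<bar>f1 t\<bar> \<le> M" by (rule M)
    then have "\<bar>(z - u) * f1 t\<bar> \<le> (z - u) * M"
      using \<open>u < z\<close> by (simp add: abs_mult mult_left_mono)
    then show ?thesis using t \<open>u < z\<close> by (simp add: abs_minus_commute mult.commute)
  qed
  have "\<bar>f u - f z\<bar> \<le> M * \<bar>u - z\<bar>" if "u \<in> {0..1}" "z \<in> {0..1}" for u z
  proof (cases u z rule: linorder_cases)
    case less then show ?thesis using lt that by blast
  next
    case equal then show ?thesis by simp
  next
    case greater then show ?thesis using lt[of z u] that by (simp add: abs_minus_commute)
  qed
  then show ?thesis using that M0 by blast
qed

lemma E_bound:
  fixes s p F L K :: real
  assumes "\<bar>F\<bar> \<le> L * \<bar>s\<bar>" "L \<ge> 0"
    and K: "K = 1 + 2 * \<bar>c\<bar> / \<nu> + b * L / \<nu>"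
  shows "\<bar>2 * s * p + 2 * p * ((c * p - b * F) / \<nu>)\<bar> \<le> K * (s\<^sup>2 + p\<^sup>2)"
proof -
  have sp: "2 * \<bar>s\<bar> * \<bar>p\<bar> \<le> s\<^sup>2 + p\<^sup>2"
    using sum_squares_bound[of "\<bar>s\<bar>" "\<bar>p\<bar>"] by (simp add: power2_eq_square)
  have a1: "\<bar>2 * s * p\<bar> \<le> s\<^sup>2 + p\<^sup>2" using sp by (simp add: abs_mult)
  have e1: "2 * p * ((c * p - b * F) / \<nu>) = (2 * (c * p * p - b * p * F)) / \<nu>"
    using nu_pos by (simp add: field_simps)
  have "\<bar>2 * p * ((c * p - b * F) / \<nu>)\<bar> = (2 * \<bar>c * p * p - b * p * F\<bar>) / \<nu>"
    unfolding e1 using nu_pos by (simp only: abs_divide abs_mult)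
  also have "\<dots> \<le> (2 * (\<bar>c\<bar> * p\<^sup>2 + b * \<bar>p\<bar> * (L * \<bar>s\<bar>))) / \<nu>"
  proof -
    have "\<bar>c * p * p - b * p * F\<bar> \<le> \<bar>c\<bar> * p\<^sup>2 + b * \<bar>p\<bar> * \<bar>F\<bar>"
      using b_pos by (simp add: abs_mult power2_eq_square abs_triangle_ineq4[THEN order_trans])
    also have "\<dots> \<le> \<bar>c\<bar> * p\<^sup>2 + b * \<bar>p\<bar> * (L * \<bar>s\<bar>)"
      using assms(1) b_pos by (intro add_left_mono mult_left_mono) auto
    finally show ?thesis using nu_pos by (intro divide_right_mono) auto
  qed
  also have "\<dots> = 2 * \<bar>c\<bar> / \<nu> * p\<^sup>2 + b * L / \<nu> * (2 * \<bar>s\<bar> * \<bar>p\<bar>)"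
    by (simp add: field_simps add_divide_distrib)
  also have "\<dots> \<le> 2 * \<bar>c\<bar> / \<nu> * (s\<^sup>2 + p\<^sup>2) + b * L / \<nu> * (s\<^sup>2 + p\<^sup>2)"
    using sp nu_pos b_pos \<open>L \<ge> 0\<close>
    by (intro add_mono mult_left_mono) auto
  finally have a2: "\<bar>2 * p * ((c * p - b * F) / \<nu>)\<bar> \<le> (2 * \<bar>c\<bar> / \<nu> + b * L / \<nu>) * (s\<^sup>2 + p\<^sup>2)"
    by (simp add: algebra_simps)
  have "\<bar>2 * s * p + 2 * p * ((c * p - b * F) / \<nu>)\<bar> \<le> \<bar>2 * s * p\<bar> + \<bar>2 * p * ((c * p - b * F) / \<nu>)\<bar>"
    by (rule abs_triangle_ineq)
  also have "\<dots> \<le> (s\<^sup>2 + p\<^sup>2) + (2 * \<bar>c\<bar> / \<nu> + b * L / \<nu>) * (s\<^sup>2 + p\<^sup>2)"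
    using a1 a2 by (rule add_mono)
  finally show ?thesis unfolding K by (simp add: algebra_simps)
qed

lemma v2_eq: "v2 x = (c * v1 x - b * f (vh x)) / \<nu>"
  using tw[of x] nu_pos by (simp add: field_simps)

lemma v1_pos: "v1 x > 0"
proof (rule ccontr)
  assume "\<not> v1 x > 0"
  then have v0: "v1 x = 0" using v1_nonneg[of x] by simp
  have "v2 x = 0"
    by (rule DERIV_local_min[OF v1_deriv, of 1]) (use v0 v1_nonneg in auto)
  then have "f (vh x) = 0" using tw[of x] v0 b_pos by simp
  define z where "z = vh x"
  have z01: "z \<in> {0..1}" using vh_ge0 vh_le1 unfolding z_def by auto
  have fz: "f z = 0" using \<open>f (vh x) = 0\<close> unfolding z_def .
  obtain L where L0: "L \<ge> 0" and L: "\<And>u z. u \<in> {0..1} \<Longrightarrow> z \<in> {0..1} \<Longrightarrow> \<bar>f u - f z\<bar> \<le> L * \<bar>u - z\<bar>"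
    using f_lip by blast
  define K where "K = 1 + 2 * \<bar>c\<bar> / \<nu> + b * L / \<nu>"
  define E where "E y = (vh y - z)\<^sup>2 + (v1 y)\<^sup>2" for y
  define E' where "E' y = 2 * (vh y - z) * v1 y + 2 * v1 y * ((c * v1 y - b * f (vh y)) / \<nu>)" for y
  have Ed: "(E has_real_derivative E' y) (at y)" for y
  proof -
    have "(E has_real_derivative (2 * (vh y - z) * v1 y + 2 * v1 y * v2 y)) (at y)"
      unfolding E_def
      by (rule derivative_eq_intros vh_deriv v1_deriv refl | simp)+
    then show ?thesis unfolding E'_def v2_eq .
  qed
  have Eb: "\<bar>E' y\<bar> \<le> K * E y" for y
  proof -
    have "\<bar>f (vh y)\<bar> \<le> L * \<bar>vh y - z\<bar>"
      using L[of "vh y" z] z01 vh_ge0 vh_le1 fz by auto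
    then show ?thesis unfolding E'_def E_def
      by (rule E_bound[OF _ L0 K_def])
  qed
  have "E y = 0" for y
    by (rule gronwall_zero[OF Ed Eb]) (auto simp: E_def v0 z_def)
  then have cst: "vh y = z" for y
    unfolding E_def by (metis add_nonneg_eq_0_iff power_eq_0_iff right_minus_eq zero_le_power2)
  have vz: "vh = (\<lambda>y::real. z)" by (rule ext, rule cst)
  have "((\<lambda>y::real. z) \<longlongrightarrow> 0) at_bot" using vh_bot unfolding vz .
  then have "z = 0" by (simp add: tendsto_const_iff)
  moreover have "((\<lambda>y::real. z) \<longlongrightarrow> 1) at_top" using vh_top unfolding vz .
  then have "z = 1" by (simp add: tendsto_const_iff)
  ultimately show False by simp
qed

lemma vh_strict: "x < y \<Longrightarrow> vh x < vh y"
  by (rule DERIV_pos_imp_increasing) (use vh_deriv v1_pos in blast)+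

lemma vh_pos: "0 < vh x"
  using vh_strict[of "x - 1" x] vh_ge0[of "x - 1"] by simp

lemma vh_lt1: "vh x < 1"
  using vh_strict[of x "x + 1"] vh_le1[of "x + 1"] by simp

end


context tw begin

definition "kap = c / \<nu>"
definition "r x = b / \<nu> * (f (vh x) / v1 x)"
definition "g x = b / \<nu> * f1 (vh x)"
definition "w x = (r x)\<^sup>2 - kap * r x + g x"
definition "hh x = b / \<nu> * f2 (vh x) * v1 x"

lemma q_deriv: "((\<lambda>y. f (vh y) / v1 y) has_real_derivative (\<nu> / b) * w x) (at x)"
proof -
  have "((\<lambda>y. f (vh y) / v1 y) has_real_derivative
        (f1 (vh x) * v1 x * v1 x - f (vh x) * v2 x) / (v1 x * v1 x)) (at x)"
    using DERIV_divide[OF DERIV_chain2[OF f_deriv vh_deriv] v1_deriv] v1_pos[of x]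
    by (simp add: algebra_simps)
  moreover have "(f1 (vh x) * v1 x * v1 x - f (vh x) * v2 x) / (v1 x * v1 x) = (\<nu> / b) * w x"
    using v1_pos[of x] nu_pos b_pos
    unfolding w_def r_def g_def kap_def v2_eq
    by (simp add: field_simps power2_eq_square)
  ultimately show ?thesis by simp
qed

lemma r_deriv: "(r has_real_derivative w x) (at x)"
proof -
  have "((\<lambda>y. b / \<nu> * (f (vh y) / v1 y)) has_real_derivative b / \<nu> * ((\<nu> / b) * w x)) (at x)"
    by (rule DERIV_cmult[OF q_deriv])
  then show ?thesis using nu_pos b_pos unfolding r_def[abs_def] by simp
qed

lemma r_cont: "continuous_on UNIV r"
  by (rule DERIV_continuous_on[where D=w]) (rule has_field_derivative_at_within[OF r_deriv])

lemma f1_deriv_at: "v \<in> {0<..<1} \<Longrightarrow> (f1 has_real_derivative f2 v) (at v)"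
proof -
  assume v: "v \<in> {0<..<1}"
  then have "(f1 has_real_derivative f2 v) (at v within {0..1})" using f2_deriv by auto
  moreover have "at v within {0..1} = at v"
    by (rule at_within_interior) (use v in auto)
  ultimately show ?thesis by simp
qed

lemma g_deriv: "(g has_real_derivative b / \<nu> * (f2 (vh x) * v1 x)) (at x)"
proof -
  have "vh x \<in> {0<..<1}" using vh_pos vh_lt1 by auto
  from DERIV_chain2[OF f1_deriv_at[OF this] vh_deriv]
  have "((\<lambda>y. f1 (vh y)) has_real_derivative f2 (vh x) * v1 x) (at x)" .
  from DERIV_cmult[OF this, of "b / \<nu>"] show ?thesis unfolding g_def[abs_def] .
qed

lemma w_deriv: "(w has_real_derivative (2 * r x - kap) * w x + hh x) (at x)"
proof -
  have wf: "w = (\<lambda>x. (r x)\<^sup>2 - kap * r x + g x)" by (rule ext) (simp add: w_def)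
  have "((\<lambda>x. (r x)\<^sup>2 - kap * r x + g x) has_real_derivative 2 * r x * w x - kap * w x + b / \<nu> * (f2 (vh x) * v1 x)) (at x)"
    by (rule derivative_eq_intros r_deriv g_deriv refl | simp)+
  then have "(w has_real_derivative 2 * r x * w x - kap * w x + b / \<nu> * (f2 (vh x) * v1 x)) (at x)"
    unfolding wf .
  then show ?thesis unfolding hh_def by (simp add: algebra_simps)
qed

lemma A_cont: "continuous_on UNIV (\<lambda>x. 2 * r x - kap)"
  by (intro continuous_intros r_cont)

lemma v2_r: "v2 x = v1 x * (kap - r x)"
  using v1_pos[of x] nu_pos unfolding v2_eq kap_def r_def by (simp add: field_simps)

end


lemma root_neg:
  fixes L k g0 :: real
  assumes "L \<le> 0" "L\<^sup>2 - k * L + g0 = 0" "g0 < 0"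
  shows "2 * L - k < 0"
proof (rule ccontr)
  assume "\<not> 2 * L - k < 0"
  then have "L - k \<ge> 0" using assms(1) by simp
  then have "L * (L - k) \<le> 0" by (rule mult_nonpos_nonneg[OF assms(1)])
  then show False using assms(2,3) by (simp add: power2_eq_square algebra_simps)
qed

lemma root_pos:
  fixes L k g0 :: real
  assumes "L \<ge> 0" "L\<^sup>2 - k * L + g0 = 0" "g0 < 0"
  shows "2 * L - k > 0"
proof (rule ccontr)
  assume "\<not> 2 * L - k > 0"
  then have "L - k \<le> 0" using assms(1) by simp
  then have "L * (L - k) \<le> 0" by (rule mult_nonneg_nonpos[OF assms(1)])
  then show False using assms(2,3) by (simp add: power2_eq_square algebra_simps)
qed

context tw begin

lemma f1_isCont: "isCont f1 x"
  using f1_cont by (simp add: continuous_on_eq_continuous_at)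

lemma g_lim_bot: "(g \<longlongrightarrow> b / \<nu> * f1 0) at_bot"
  unfolding g_def[abs_def]
  by (intro tendsto_intros isCont_tendsto_compose[OF f1_isCont vh_bot])

lemma g_lim_top: "(g \<longlongrightarrow> b / \<nu> * f1 1) at_top"
  unfolding g_def[abs_def]
  by (intro tendsto_intros isCont_tendsto_compose[OF f1_isCont vh_top])

lemma w_fun: "w = (\<lambda>x. (r x)\<^sup>2 - kap * r x + g x)"
  by (rule ext) (simp add: w_def)

lemma r_neg: "vh x < a \<Longrightarrow> r x < 0"
  using f_neg[of "vh x"] vh_pos[of x] v1_pos[of x] nu_pos b_pos unfolding r_def
  by (simp add: mult_pos_neg divide_neg_pos)

lemma r_pos: "vh x > a \<Longrightarrow> r x > 0"
  using f_pos[of "vh x"] vh_lt1[of x] v1_pos[of x] nu_pos b_pos unfolding r_def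
  by simp

lemma hh_pos: "vh x < vs \<Longrightarrow> hh x > 0"
  using f2_pos[of "vh x"] vh_pos[of x] v1_pos[of x] nu_pos b_pos unfolding hh_def
  by simp

lemma hh_neg: "vh x > vs \<Longrightarrow> hh x < 0"
proof -
  assume "vh x > vs"
  then have "f2 (vh x) < 0" using f2_neg[of "vh x"] vh_lt1[of x] by simp
  then have "b / \<nu> * f2 (vh x) < 0" by (rule mult_pos_neg[OF divide_pos_pos[OF b_pos nu_pos]])
  then show ?thesis unfolding hh_def by (rule mult_neg_pos[OF _ v1_pos])
qed

lemma w_pos_left: assumes x0: "vh x0 \<le> vs" shows "w x0 > 0"
proof (rule ccontr)
  assume "\<not> w x0 > 0"
  then have w0: "w x0 \<le> 0" by simp
  have wneg: "w y < 0" if "y < x0" for y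
  proof (rule lin_ode_sign[OF that w_deriv A_cont _ w0])
    fix t assume "y < t" "t < x0"
    then have "vh t < vs" using vh_strict[of t x0] x0 by simp
    then show "hh t > 0" by (rule hh_pos)
  qed
  have "eventually (\<lambda>t. vh t < a) at_bot"
    using order_tendstoD(2)[OF vh_bot a_in(1)] .
  then obtain X where X: "\<And>t. t \<le> X \<Longrightarrow> vh t < a" by (auto simp: eventually_at_bot_linorder)
  define x1 where "x1 = min X (x0 - 1)"
  have x1: "x1 < x0" "\<And>t. t \<le> x1 \<Longrightarrow> vh t < a" using X unfolding x1_def by auto
  have rneg: "r t < 0" if "t \<le> x1" for t using r_neg x1(2)[OF that] .
  have rmono: "r s \<le> r t" if "t \<le> s" "s \<le> x1" for s t
    by (rule DERIV_nonpos_imp_nonincreasing[OF that(1)])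
      (use that x1 wneg r_deriv in \<open>fastforce intro: less_imp_le\<close>)
  obtain L where rL: "(r \<longlongrightarrow> L) at_bot"
    using mono_conv_bot'[of x1 r 0] rmono rneg by (meson less_imp_le)
  have L0: "L \<le> 0"
  proof (rule tendsto_upperbound[OF rL])
    show "eventually (\<lambda>t. r t \<le> 0) at_bot"
      unfolding eventually_at_bot_linorder using rneg by (auto intro!: exI[of _ x1] less_imp_le)
  qed simp
  have wL: "(w \<longlongrightarrow> L\<^sup>2 - kap * L + b / \<nu> * f1 0) at_bot"
    unfolding w_fun by (intro tendsto_intros rL g_lim_bot)
  have m0: "L\<^sup>2 - kap * L + b / \<nu> * f1 0 = 0"
    by (rule deriv_lim_zero_bot[OF r_deriv rL wL])
  have g0: "b / \<nu> * f1 0 < 0" by (rule mult_pos_neg[OF divide_pos_pos[OF b_pos nu_pos]]) (use f1_signs in auto)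
  have AL: "2 * L - kap < 0" by (rule root_neg[OF L0 m0 g0])
  have "((\<lambda>x. 2 * r x - kap) \<longlongrightarrow> 2 * L - kap) at_bot" by (intro tendsto_intros rL)
  from order_tendstoD(2)[OF this AL]
  obtain X2 where X2: "\<And>t. t \<le> X2 \<Longrightarrow> 2 * r t - kap < 0" by (auto simp: eventually_at_bot_linorder)
  define x2 where "x2 = min X2 x1"
  have wx2: "w x2 < 0" using wneg x1 unfolding x2_def by simp
  have winc: "w t < w x2" if "t < x2" for t
  proof (rule DERIV_pos_imp_increasing[OF that])
    fix s assume s: "t \<le> s" "s \<le> x2"
    have "2 * r s - kap < 0" using X2 s unfolding x2_def by simp
    moreover have "w s < 0" using wneg s x1 unfolding x2_def by simp
    ultimately have "(2 * r s - kap) * w s > 0" by (simp add: mult_neg_neg)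
    moreover have "hh s > 0"
      using hh_pos x1(2)[of s] s vs_in unfolding x2_def by simp
    ultimately show "\<exists>y. (w has_real_derivative y) (at s) \<and> y > 0"
      using w_deriv[of s] by (intro exI[of _ "(2 * r s - kap) * w s + hh s"]) simp
  qed
  have "(w \<longlongrightarrow> 0) at_bot" using wL unfolding m0 .
  then have "0 \<le> w x2"
  proof (rule tendsto_upperbound)
    show "eventually (\<lambda>t. w t \<le> w x2) at_bot"
      unfolding eventually_at_bot_linorder using winc by (auto intro!: exI[of _ x2] less_imp_le simp: le_less)
  qed simp
  then show False using wx2 by simp
qed

lemma w_pos_right: assumes x0: "vh x0 \<ge> vs" shows "w x0 > 0"
proof (rule ccontr)
  assume "\<not> w x0 > 0"
  then have w0: "w x0 \<le> 0" by simp
  have wneg: "w y < 0" if "x0 < y" for y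
  proof (rule lin_ode_sign_right[OF that w_deriv A_cont _ w0])
    fix t assume "x0 < t" "t < y"
    then have "vh t > vs" using vh_strict[of x0 t] x0 by simp
    then show "hh t < 0" by (rule hh_neg)
  qed
  define x1 where "x1 = x0 + 1"
  have x1: "x0 < x1" unfolding x1_def by simp
  have va: "vh t > a" if "t \<ge> x0" for t
    using monoD[OF vh_mono that] x0 vs_in by linarith
  have rpos: "r t > 0" if "t \<ge> x1" for t using r_pos va that x1 by simp
  have rmono: "r s \<le> r t" if "x1 \<le> t" "t \<le> s" for s t
    by (rule DERIV_nonpos_imp_nonincreasing[OF that(2)])
      (use that x1 wneg r_deriv in \<open>fastforce intro: less_imp_le\<close>)
  obtain L where rL: "(r \<longlongrightarrow> L) at_top"
    using mono_conv_top'[of x1 r 0] rmono rpos by (meson less_imp_le)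
  have L0: "L \<ge> 0"
  proof (rule tendsto_lowerbound[OF rL])
    show "eventually (\<lambda>t. 0 \<le> r t) at_top"
      unfolding eventually_at_top_linorder using rpos by (auto intro!: exI[of _ x1] less_imp_le)
  qed simp
  have wL: "(w \<longlongrightarrow> L\<^sup>2 - kap * L + b / \<nu> * f1 1) at_top"
    unfolding w_fun by (intro tendsto_intros rL g_lim_top)
  have m0: "L\<^sup>2 - kap * L + b / \<nu> * f1 1 = 0"
    by (rule deriv_lim_zero_top[OF r_deriv rL wL])
  have g1: "b / \<nu> * f1 1 < 0" by (rule mult_pos_neg[OF divide_pos_pos[OF b_pos nu_pos]]) (use f1_signs in auto)
  have AL: "2 * L - kap > 0" by (rule root_pos[OF L0 m0 g1])
  have "((\<lambda>x. 2 * r x - kap) \<longlongrightarrow> 2 * L - kap) at_top" by (intro tendsto_intros rL)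
  from order_tendstoD(1)[OF this AL]
  obtain X2 where X2: "\<And>t. t \<ge> X2 \<Longrightarrow> 2 * r t - kap > 0" by (auto simp: eventually_at_top_linorder)
  define x2 where "x2 = max X2 x1"
  have wx2: "w x2 < 0" using wneg x1 unfolding x2_def by simp
  have wdec: "w t < w x2" if "x2 < t" for t
  proof (rule DERIV_neg_imp_decreasing[OF that])
    fix s assume s: "x2 \<le> s" "s \<le> t"
    have "2 * r s - kap > 0" using X2 s unfolding x2_def by simp
    moreover have "w s < 0" using wneg s x1 unfolding x2_def by simp
    ultimately have "(2 * r s - kap) * w s < 0" by (simp add: mult_pos_neg)
    moreover have "vh s > vs"
      using vh_strict[of x0 s] s x0 x1 unfolding x2_def by simp
    then have "hh s < 0" by (rule hh_neg)
    ultimately show "\<exists>y. (w has_real_derivative y) (at s) \<and> y < 0"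
      using w_deriv[of s] by (intro exI[of _ "(2 * r s - kap) * w s + hh s"]) simp
  qed
  have "(w \<longlongrightarrow> 0) at_top" using wL unfolding m0 .
  then have "0 \<le> w x2"
  proof (rule tendsto_upperbound)
    show "eventually (\<lambda>t. w t \<le> w x2) at_top"
      unfolding eventually_at_top_linorder using wdec by (auto intro!: exI[of _ x2] less_imp_le simp: le_less)
  qed simp
  then show False using wx2 by simp
qed

lemma w_pos: "w x > 0"
  using w_pos_left w_pos_right by (cases "vh x \<le> vs") auto

end


lemma quad_big:
  fixes rho k gg Mg :: real
  assumes "\<bar>gg\<bar> \<le> Mg" "Mg \<ge> 0" "\<bar>rho\<bar> \<ge> 2 * \<bar>k\<bar> + 2 * Mg + 2"
  shows "rho\<^sup>2 - k * rho + gg \<ge> rho\<^sup>2 / 2"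
proof -
  have r1: "\<bar>rho\<bar> \<ge> 1" using assms by linarith
  have "\<bar>rho\<bar> * \<bar>rho\<bar> \<ge> \<bar>rho\<bar> * (2 * \<bar>k\<bar> + 2 * Mg + 2)"
    using assms(3) by (intro mult_left_mono) auto
  then have "rho\<^sup>2 / 2 \<ge> \<bar>rho\<bar> * \<bar>k\<bar> + \<bar>rho\<bar> * Mg + \<bar>rho\<bar>"
    by (simp add: power2_eq_square abs_mult_self_eq algebra_simps)
  moreover have "\<bar>rho\<bar> * Mg \<ge> Mg"
    using r1 assms(2) mult_right_mono[of 1 "\<bar>rho\<bar>" Mg] by simp
  moreover have "k * rho \<le> \<bar>rho\<bar> * \<bar>k\<bar>"
    by (metis abs_ge_self abs_mult mult.commute)
  moreover have "gg \<ge> - Mg" using assms(1) by linarith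
  ultimately show ?thesis by linarith
qed

context tw begin

lemma r_strict: "x < y \<Longrightarrow> r x < r y"
  by (rule DERIV_pos_imp_increasing) (use r_deriv w_pos in blast)+

lemma r_mono: "x \<le> y \<Longrightarrow> r x \<le> r y"
  using r_strict[of x y] by (cases "x = y") auto

lemma r_bounds: obtains R where "R > 0" "\<And>x. \<bar>r x\<bar> \<le> R"
proof -
  obtain M where M0: "M \<ge> 0" and M: "\<And>y. y \<in> {0..1} \<Longrightarrow> \<bar>f1 y\<bar> \<le> M"
    using f1_bound by blast
  define Mg where "Mg = b / \<nu> * M"
  have Mg0: "Mg \<ge> 0" unfolding Mg_def using M0 nu_pos b_pos by simp
  have gb: "\<bar>g x\<bar> \<le> Mg" for x
  proof -
    have "\<bar>f1 (vh x)\<bar> \<le> M" using M vh_ge0 vh_le1 by auto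
    then have "b / \<nu> * \<bar>f1 (vh x)\<bar> \<le> b / \<nu> * M"
      by (rule mult_left_mono) (use nu_pos b_pos in simp)
    moreover have "\<bar>g x\<bar> = b / \<nu> * \<bar>f1 (vh x)\<bar>"
      unfolding g_def using nu_pos b_pos by (simp add: abs_mult)
    ultimately show ?thesis unfolding Mg_def by simp
  qed
  define R where "R = 2 * \<bar>kap\<bar> + 2 * Mg + 2"
  have R0: "R > 0" unfolding R_def using Mg0 by simp
  have big: "w x \<ge> (r x)\<^sup>2 / 2" if "\<bar>r x\<bar> \<ge> R" for x
    unfolding w_def by (rule quad_big[OF gb Mg0]) (use that in \<open>simp add: R_def\<close>)
  have lo: "r x \<ge> - R" for x
    by (rule blowup_bot[OF r_deriv w_pos _ R0]) (use big in simp)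
  have hi: "r x \<le> R" for x
    by (rule blowup_top[OF r_deriv w_pos _ R0]) (use big R0 in simp)
  show ?thesis
  proof (rule that[OF R0])
    fix x show "\<bar>r x\<bar> \<le> R" using lo[of x] hi[of x] by (simp add: abs_le_iff)
  qed
qed

lemma r_lim_bot: obtains Lm where "(r \<longlongrightarrow> Lm) at_bot"
proof -
  obtain R where "R > 0" "\<And>x. \<bar>r x\<bar> \<le> R" using r_bounds by blast
  then have lo: "\<And>x. - R \<le> r x" by (metis abs_le_D2 minus_le_iff)
  have "\<exists>L. (r \<longlongrightarrow> L) at_bot"
    by (rule mono_conv_bot[of 0 r "-R"]) (auto intro: r_mono lo)
  then show ?thesis using that by blast
qed

lemma r_lim_top: obtains Lp where "(r \<longlongrightarrow> Lp) at_top"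
proof -
  obtain R where "R > 0" "\<And>x. \<bar>r x\<bar> \<le> R" using r_bounds by blast
  then have hi: "\<And>x. r x \<le> R" by (metis abs_le_D1)
  have "\<exists>L. (r \<longlongrightarrow> L) at_top"
    by (rule mono_conv_top[of 0 r R]) (auto intro: r_mono hi)
  then show ?thesis using that by blast
qed

lemma g0_neg: "b / \<nu> * f1 0 < 0"
  by (rule mult_pos_neg[OF divide_pos_pos[OF b_pos nu_pos]]) (use f1_signs in auto)

lemma g1_neg: "b / \<nu> * f1 1 < 0"
  by (rule mult_pos_neg[OF divide_pos_pos[OF b_pos nu_pos]]) (use f1_signs in auto)

lemma Lm_val:
  assumes rL: "(r \<longlongrightarrow> Lm) at_bot"
  shows "Lm = c / (2 * \<nu>) - sqrt ((c / (2 * \<nu>))\<^sup>2 - b / \<nu> * f1 0)"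
proof -
  have L0: "Lm \<le> 0"
  proof (rule tendsto_upperbound[OF rL])
    have "eventually (\<lambda>t. vh t < a) at_bot"
      using order_tendstoD(2)[OF vh_bot a_in(1)] .
    then show "eventually (\<lambda>t. r t \<le> 0) at_bot"
      by (rule eventually_mono) (use r_neg less_imp_le in blast)
  qed simp
  have wL: "(w \<longlongrightarrow> Lm\<^sup>2 - kap * Lm + b / \<nu> * f1 0) at_bot"
    unfolding w_fun by (intro tendsto_intros rL g_lim_bot)
  have m0: "Lm\<^sup>2 - kap * Lm + b / \<nu> * f1 0 = 0"
    by (rule deriv_lim_zero_bot[OF r_deriv rL wL])
  have neg: "2 * Lm - kap < 0" by (rule root_neg[OF L0 m0 g0_neg])
  have k2: "kap / 2 = c / (2 * \<nu>)" unfolding kap_def by simp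
  have ex: "(Lm - kap / 2)\<^sup>2 = Lm\<^sup>2 - kap * Lm + (kap / 2)\<^sup>2"
    by (simp add: power2_eq_square algebra_simps)
  have sq: "(c / (2 * \<nu>))\<^sup>2 - b / \<nu> * f1 0 = (Lm - c / (2 * \<nu>))\<^sup>2"
    using ex m0 unfolding k2 by linarith
  have lt: "Lm < c / (2 * \<nu>)" using neg k2 by linarith
  have "sqrt ((c / (2 * \<nu>))\<^sup>2 - b / \<nu> * f1 0) = \<bar>Lm - c / (2 * \<nu>)\<bar>"
    unfolding sq by (rule real_sqrt_abs)
  also have "\<dots> = c / (2 * \<nu>) - Lm" using lt by simp
  finally have "sqrt ((c / (2 * \<nu>))\<^sup>2 - b / \<nu> * f1 0) = c / (2 * \<nu>) - Lm" .
  then show ?thesis by simp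
qed

lemma Lp_val:
  assumes rL: "(r \<longlongrightarrow> Lp) at_top"
  shows "Lp = c / (2 * \<nu>) + sqrt ((c / (2 * \<nu>))\<^sup>2 - b / \<nu> * f1 1)"
proof -
  have L0: "Lp \<ge> 0"
  proof (rule tendsto_lowerbound[OF rL])
    have "eventually (\<lambda>t. vh t > a) at_top"
      using order_tendstoD(1)[OF vh_top a_in(2)] .
    then show "eventually (\<lambda>t. 0 \<le> r t) at_top"
      by (rule eventually_mono) (use r_pos less_imp_le in blast)
  qed simp
  have wL: "(w \<longlongrightarrow> Lp\<^sup>2 - kap * Lp + b / \<nu> * f1 1) at_top"
    unfolding w_fun by (intro tendsto_intros rL g_lim_top)
  have m0: "Lp\<^sup>2 - kap * Lp + b / \<nu> * f1 1 = 0"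
    by (rule deriv_lim_zero_top[OF r_deriv rL wL])
  have pos: "2 * Lp - kap > 0" by (rule root_pos[OF L0 m0 g1_neg])
  have k2: "kap / 2 = c / (2 * \<nu>)" unfolding kap_def by simp
  have ex: "(Lp - kap / 2)\<^sup>2 = Lp\<^sup>2 - kap * Lp + (kap / 2)\<^sup>2"
    by (simp add: power2_eq_square algebra_simps)
  have sq: "(c / (2 * \<nu>))\<^sup>2 - b / \<nu> * f1 1 = (Lp - c / (2 * \<nu>))\<^sup>2"
    using ex m0 unfolding k2 by linarith
  have lt: "Lp > c / (2 * \<nu>)" using pos k2 by linarith
  have "sqrt ((c / (2 * \<nu>))\<^sup>2 - b / \<nu> * f1 1) = \<bar>Lp - c / (2 * \<nu>)\<bar>"
    unfolding sq by (rule real_sqrt_abs)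
  also have "\<dots> = Lp - c / (2 * \<nu>)" using lt by simp
  finally have "sqrt ((c / (2 * \<nu>))\<^sup>2 - b / \<nu> * f1 1) = Lp - c / (2 * \<nu>)" .
  then show ?thesis by simp
qed

lemma INF_r:
  assumes rL: "(r \<longlongrightarrow> Lm) at_bot"
  shows "(INF x. r x) = Lm"
proof -
  have lo: "Lm \<le> r x" for x
  proof (rule tendsto_upperbound[OF rL])
    show "eventually (\<lambda>t. r t \<le> r x) at_bot"
      unfolding eventually_at_bot_linorder by (auto intro!: exI[of _ x] r_mono)
  qed simp
  have bdd: "bdd_below (range r)" by (rule bdd_belowI2[of _ Lm]) (rule lo)
  have "(INF x. r x) \<le> Lm"
  proof (rule tendsto_lowerbound[OF rL])
    show "eventually (\<lambda>t. (INF x. r x) \<le> r t) at_bot"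
      by (rule always_eventually) (auto intro: cINF_lower[OF bdd])
  qed simp
  moreover have "Lm \<le> (INF x. r x)" by (rule cINF_greatest) (auto intro: lo)
  ultimately show ?thesis by simp
qed

lemma SUP_r:
  assumes rL: "(r \<longlongrightarrow> Lp) at_top"
  shows "(SUP x. r x) = Lp"
proof -
  have hi: "r x \<le> Lp" for x
  proof (rule tendsto_lowerbound[OF rL])
    show "eventually (\<lambda>t. r x \<le> r t) at_top"
      unfolding eventually_at_top_linorder by (auto intro!: exI[of _ x] r_mono)
  qed simp
  have bdd: "bdd_above (range r)" by (rule bdd_aboveI2[of _ _ Lp]) (rule hi)
  have "Lp \<le> (SUP x. r x)"
  proof (rule tendsto_upperbound[OF rL])
    show "eventually (\<lambda>t. r t \<le> (SUP x. r x)) at_top"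
      by (rule always_eventually) (auto intro: cSUP_upper[OF _ bdd])
  qed simp
  moreover have "(SUP x. r x) \<le> Lp" by (rule cSUP_least) (auto intro: hi)
  ultimately show ?thesis by simp
qed

end


context tw begin

lemma v1_cont: "continuous_on UNIV v1"
  by (rule DERIV_continuous_on[where D=v2]) (rule has_field_derivative_at_within[OF v1_deriv])

lemma integrand_bound:
  obtains K1 where "K1 > 0" "\<And>x. (v1 x)\<^sup>2 + (v2 x)\<^sup>2 \<le> K1 * (v1 x)\<^sup>2"
proof -
  obtain R where R0: "R > 0" and R: "\<And>x. \<bar>r x\<bar> \<le> R" using r_bounds by blast
  define K1 where "K1 = 1 + (\<bar>kap\<bar> + R)\<^sup>2"
  have "(v1 x)\<^sup>2 + (v2 x)\<^sup>2 \<le> K1 * (v1 x)\<^sup>2" for x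
  proof -
    have "\<bar>kap - r x\<bar> \<le> \<bar>kap\<bar> + R" using abs_triangle_ineq4[of kap "r x"] R[of x] by linarith
    then have "(kap - r x)\<^sup>2 \<le> (\<bar>kap\<bar> + R)\<^sup>2"
      by (metis abs_ge_zero order_trans power2_abs power_mono)
    then have "(v1 x)\<^sup>2 * (kap - r x)\<^sup>2 \<le> (v1 x)\<^sup>2 * (\<bar>kap\<bar> + R)\<^sup>2"
      by (rule mult_left_mono) simp
    moreover have "(v2 x)\<^sup>2 = (v1 x)\<^sup>2 * (kap - r x)\<^sup>2" unfolding v2_r by (rule power_mult_distrib)
    moreover have "K1 * (v1 x)\<^sup>2 = (v1 x)\<^sup>2 + (v1 x)\<^sup>2 * (\<bar>kap\<bar> + R)\<^sup>2"
      unfolding K1_def by (simp add: algebra_simps)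
    ultimately show ?thesis by linarith
  qed
  moreover have "K1 > 0" unfolding K1_def by (simp add: add_pos_nonneg)
  ultimately show ?thesis using that by blast
qed

lemma integ_right:
  assumes rL: "(r \<longlongrightarrow> Lp) at_top" and al: "\<alpha> * (c / \<nu>) > c / \<nu> - Lp"
  shows "(\<lambda>x. exp (- 2 * \<alpha> * (c / \<nu>) * x) * ((v1 x)\<^sup>2 + (v2 x)\<^sup>2)) integrable_on {0..}"
proof -
  define \<beta> where "\<beta> = \<alpha> * kap"
  define \<epsilon> where "\<epsilon> = (\<beta> - (kap - Lp)) / 2"
  have e0: "\<epsilon> > 0" using al unfolding \<epsilon>_def \<beta>_def kap_def by simp
  have "((\<lambda>t. kap - r t) \<longlongrightarrow> kap - Lp) at_top" by (intro tendsto_intros rL)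
  moreover have "kap - Lp < \<beta> - \<epsilon>" using e0 unfolding \<epsilon>_def by (simp add: field_simps)
  ultimately have "eventually (\<lambda>t. kap - r t < \<beta> - \<epsilon>) at_top" by (rule order_tendstoD(2))
  then obtain X where X: "\<And>t. t \<ge> X \<Longrightarrow> kap - r t < \<beta> - \<epsilon>"
    unfolding eventually_at_top_linorder by blast
  define C0 where "C0 = v1 X * exp (- (\<beta> - \<epsilon>) * X)"
  have phi: "v1 t * exp (- (\<beta> - \<epsilon>) * t) \<le> C0" if "X \<le> t" for t
    unfolding C0_def
  proof (rule DERIV_nonpos_imp_nonincreasing[OF that])
    fix s assume s: "X \<le> s" "s \<le> t"
    have d: "((\<lambda>s. v1 s * exp (- (\<beta> - \<epsilon>) * s)) has_real_derivative
        v2 s * exp (- (\<beta> - \<epsilon>) * s) + v1 s * (exp (- (\<beta> - \<epsilon>) * s) * (- (\<beta> - \<epsilon>)))) (at s)"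
      by (rule derivative_eq_intros v1_deriv refl | simp)+
    have "v2 s * exp (- (\<beta> - \<epsilon>) * s) + v1 s * (exp (- (\<beta> - \<epsilon>) * s) * (- (\<beta> - \<epsilon>)))
          = v1 s * (kap - r s - (\<beta> - \<epsilon>)) * exp (- (\<beta> - \<epsilon>) * s)"
      unfolding v2_r by (simp add: algebra_simps)
    also have "\<dots> \<le> 0"
      using X[of s] s v1_pos[of s] by (intro mult_nonpos_nonneg mult_nonneg_nonpos) auto
    finally show "\<exists>y. ((\<lambda>s. v1 s * exp (- (\<beta> - \<epsilon>) * s)) has_real_derivative y) (at s) \<and> y \<le> 0"
      using d by blast
  qed
  obtain K1 where K1: "K1 > 0" "\<And>x. (v1 x)\<^sup>2 + (v2 x)\<^sup>2 \<le> K1 * (v1 x)\<^sup>2"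
    using integrand_bound by blast
  show ?thesis
  proof (rule integrable_exp_bound_top[where xb=X and C="K1 * C0\<^sup>2" and e="2 * \<epsilon>"])
    show "continuous_on UNIV (\<lambda>x. exp (- 2 * \<alpha> * (c / \<nu>) * x) * ((v1 x)\<^sup>2 + (v2 x)\<^sup>2))"
      by (intro continuous_intros v1_cont v2_cont)
    show "2 * \<epsilon> > 0" using e0 by simp
    fix x assume x: "X \<le> x"
    have v1x: "v1 x \<le> C0 * exp ((\<beta> - \<epsilon>) * x)"
    proof -
      have e1: "exp (- (\<beta> - \<epsilon>) * x) * exp ((\<beta> - \<epsilon>) * x) = 1"
        by (simp add: exp_add[symmetric] algebra_simps)
      have "v1 x = v1 x * exp (- (\<beta> - \<epsilon>) * x) * exp ((\<beta> - \<epsilon>) * x)"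
        by (metis e1 mult.assoc mult.right_neutral)
      also have "\<dots> \<le> C0 * exp ((\<beta> - \<epsilon>) * x)"
        using phi[OF x] by (rule mult_right_mono) simp
      finally show ?thesis .
    qed
    have sq: "(v1 x)\<^sup>2 \<le> (C0 * exp ((\<beta> - \<epsilon>) * x))\<^sup>2"
      using v1x v1_pos[of x] by (intro power_mono) auto
    have "\<bar>exp (- 2 * \<alpha> * (c / \<nu>) * x) * ((v1 x)\<^sup>2 + (v2 x)\<^sup>2)\<bar>
          = exp (- 2 * \<beta> * x) * ((v1 x)\<^sup>2 + (v2 x)\<^sup>2)"
      unfolding \<beta>_def kap_def by simp
    also have "\<dots> \<le> exp (- 2 * \<beta> * x) * (K1 * (C0 * exp ((\<beta> - \<epsilon>) * x))\<^sup>2)"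
      using K1 sq by (intro mult_left_mono order_trans[OF K1(2)]) auto
    also have "\<dots> = K1 * C0\<^sup>2 * exp (- (2 * \<epsilon>) * x)"
      by (simp add: power_mult_distrib power2_eq_square mult_ac exp_add[symmetric] algebra_simps)
    finally show "\<bar>exp (- 2 * \<alpha> * (c / \<nu>) * x) * ((v1 x)\<^sup>2 + (v2 x)\<^sup>2)\<bar> \<le> K1 * C0\<^sup>2 * exp (- (2 * \<epsilon>) * x)" .
  qed
qed

lemma integ_left:
  assumes rL: "(r \<longlongrightarrow> Lm) at_bot" and al: "\<alpha> * (c / \<nu>) < c / \<nu> - Lm"
  shows "(\<lambda>x. exp (- 2 * \<alpha> * (c / \<nu>) * x) * ((v1 x)\<^sup>2 + (v2 x)\<^sup>2)) integrable_on {..0}"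
proof -
  define \<beta> where "\<beta> = \<alpha> * kap"
  define \<epsilon> where "\<epsilon> = ((kap - Lm) - \<beta>) / 2"
  have e0: "\<epsilon> > 0" using al unfolding \<epsilon>_def \<beta>_def kap_def by simp
  have "((\<lambda>t. kap - r t) \<longlongrightarrow> kap - Lm) at_bot" by (intro tendsto_intros rL)
  moreover have "kap - Lm > \<beta> + \<epsilon>" using e0 unfolding \<epsilon>_def by (simp add: field_simps)
  ultimately have "eventually (\<lambda>t. kap - r t > \<beta> + \<epsilon>) at_bot" by (rule order_tendstoD(1))
  then obtain X where X: "\<And>t. t \<le> X \<Longrightarrow> kap - r t > \<beta> + \<epsilon>"
    unfolding eventually_at_bot_linorder by blast
  define C0 where "C0 = v1 X * exp (- (\<beta> + \<epsilon>) * X)"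
  have phi: "v1 t * exp (- (\<beta> + \<epsilon>) * t) \<le> C0" if "t \<le> X" for t
    unfolding C0_def
  proof (rule DERIV_nonneg_imp_nondecreasing[OF that])
    fix s assume s: "t \<le> s" "s \<le> X"
    have d: "((\<lambda>s. v1 s * exp (- (\<beta> + \<epsilon>) * s)) has_real_derivative
        v2 s * exp (- (\<beta> + \<epsilon>) * s) + v1 s * (exp (- (\<beta> + \<epsilon>) * s) * (- (\<beta> + \<epsilon>)))) (at s)"
      by (rule derivative_eq_intros v1_deriv refl | simp)+
    have "v2 s * exp (- (\<beta> + \<epsilon>) * s) + v1 s * (exp (- (\<beta> + \<epsilon>) * s) * (- (\<beta> + \<epsilon>)))
          = v1 s * (kap - r s - (\<beta> + \<epsilon>)) * exp (- (\<beta> + \<epsilon>) * s)"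
      unfolding v2_r by (simp add: algebra_simps)
    also have "\<dots> \<ge> 0"
      using X[of s] s v1_pos[of s] by (intro mult_nonneg_nonneg) auto
    finally show "\<exists>y. ((\<lambda>s. v1 s * exp (- (\<beta> + \<epsilon>) * s)) has_real_derivative y) (at s) \<and> y \<ge> 0"
      using d by blast
  qed
  obtain K1 where K1: "K1 > 0" "\<And>x. (v1 x)\<^sup>2 + (v2 x)\<^sup>2 \<le> K1 * (v1 x)\<^sup>2"
    using integrand_bound by blast
  define F where "F x = exp (- 2 * \<alpha> * (c / \<nu>) * x) * ((v1 x)\<^sup>2 + (v2 x)\<^sup>2)" for x
  have Fc: "continuous_on UNIV F"
    unfolding F_def[abs_def] by (intro continuous_intros v1_cont v2_cont)
  have "(\<lambda>x. F (- x)) integrable_on {0..}"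
  proof (rule integrable_exp_bound_top[where xb="- X" and C="K1 * C0\<^sup>2" and e="2 * \<epsilon>"])
    show "continuous_on UNIV (\<lambda>x. F (- x))"
      by (intro continuous_on_compose2[OF Fc] continuous_intros) auto
    show "2 * \<epsilon> > 0" using e0 by simp
    fix y assume y: "- X \<le> y"
    define x where "x = - y"
    have x: "x \<le> X" using y unfolding x_def by simp
    have v1x: "v1 x \<le> C0 * exp ((\<beta> + \<epsilon>) * x)"
    proof -
      have e1: "exp (- (\<beta> + \<epsilon>) * x) * exp ((\<beta> + \<epsilon>) * x) = 1"
        by (simp add: exp_add[symmetric] algebra_simps)
      have "v1 x = v1 x * exp (- (\<beta> + \<epsilon>) * x) * exp ((\<beta> + \<epsilon>) * x)"
        by (metis e1 mult.assoc mult.right_neutral)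
      also have "\<dots> \<le> C0 * exp ((\<beta> + \<epsilon>) * x)"
        using phi[OF x] by (rule mult_right_mono) simp
      finally show ?thesis .
    qed
    have sq: "(v1 x)\<^sup>2 \<le> (C0 * exp ((\<beta> + \<epsilon>) * x))\<^sup>2"
      using v1x v1_pos[of x] by (intro power_mono) auto
    have "\<bar>F (- y)\<bar> = exp (- 2 * \<beta> * x) * ((v1 x)\<^sup>2 + (v2 x)\<^sup>2)"
      unfolding F_def \<beta>_def kap_def x_def by simp
    also have "\<dots> \<le> exp (- 2 * \<beta> * x) * (K1 * (C0 * exp ((\<beta> + \<epsilon>) * x))\<^sup>2)"
      using K1 sq by (intro mult_left_mono order_trans[OF K1(2)]) auto
    also have "\<dots> = K1 * C0\<^sup>2 * exp (- (2 * \<epsilon>) * y)"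
      unfolding x_def by (simp add: power_mult_distrib power2_eq_square mult_ac exp_add[symmetric] algebra_simps)
    finally show "\<bar>F (- y)\<bar> \<le> K1 * C0\<^sup>2 * exp (- (2 * \<epsilon>) * y)" .
  qed
  then have "F integrable_on {..0}" by (rule integrable_reflect_half)
  then show ?thesis unfolding F_def[abs_def] .
qed

end

theorem proposition1p2:
  fixes \<nu> b a vs c :: real
    and f f1 f2 :: "real \<Rightarrow> real"
    and vh v1 v2 :: "real \<Rightarrow> real"
  assumes nu_pos: "\<nu> > 0" and b_pos: "b > 0"
    and f_deriv: "\<And>x. (f has_real_derivative f1 x) (at x)"
    and f1_cont: "continuous_on UNIV f1"
    and f2_deriv: "\<And>v. v \<in> {0..1} \<Longrightarrow> (f1 has_real_derivative f2 v) (at v within {0..1})"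
    and a_in: "0 < a" "a < 1"
    and f_zeros: "f 0 = 0" "f a = 0" "f 1 = 0"
    and f_neg: "\<And>v. v \<in> {0<..<a} \<Longrightarrow> f v < 0"
    and f_pos: "\<And>v. v \<in> {a<..<1} \<Longrightarrow> f v > 0"
    and f1_signs: "f1 0 < 0" "f1 a > 0" "f1 1 < 0"
    and f_int: "integral {0..1} f \<ge> 0"
    and vs_in: "a < vs" "vs < 1"
    and f2_pos: "\<And>v. v \<in> {0..<vs} \<Longrightarrow> f2 v > 0"
    and f2_neg: "\<And>v. v \<in> {vs<..1} \<Longrightarrow> f2 v < 0"
    and vh_mono: "mono vh"
    and vh_deriv: "\<And>x. (vh has_real_derivative v1 x) (at x)"
    and v1_deriv: "\<And>x. (v1 has_real_derivative v2 x) (at x)"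
    and v2_cont: "continuous_on UNIV v2"
    and vh_bot: "(vh \<longlongrightarrow> 0) at_bot"
    and vh_top: "(vh \<longlongrightarrow> 1) at_top"
    and tw: "\<And>x. c * v1 x = \<nu> * v2 x + b * f (vh x)"
  defines "gm \<equiv> (INF x. b / \<nu> * (f (vh x) / v1 x))"
    and "gp \<equiv> (SUP x. b / \<nu> * (f (vh x) / v1 x))"
  shows
    "(\<forall>x. v1 x > 0)
     \<and> strict_mono (\<lambda>x. f (vh x) / v1 x)
     \<and> (\<forall>x. \<exists>D. D > 0
            \<and> ((\<lambda>y. f (vh y) / v1 y) has_real_derivative D) (at x)
            \<and> ((\<lambda>y. v2 y / v1 y) has_real_derivative (- (b / \<nu> * D))) (at x))
     \<and> bdd_below (range (\<lambda>x. b / \<nu> * (f (vh x) / v1 x)))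
     \<and> bdd_above (range (\<lambda>x. b / \<nu> * (f (vh x) / v1 x)))
     \<and> gm = c / (2 * \<nu>) - sqrt ((c / (2 * \<nu>))\<^sup>2 - b / \<nu> * f1 0)
     \<and> gp = c / (2 * \<nu>) + sqrt ((c / (2 * \<nu>))\<^sup>2 - b / \<nu> * f1 1)
     \<and> (\<forall>\<alpha>. \<alpha> * (c / \<nu>) < c / \<nu> - gm \<longrightarrow>
          (\<lambda>x. exp (- 2 * \<alpha> * (c / \<nu>) * x) * ((v1 x)\<^sup>2 + (v2 x)\<^sup>2)) integrable_on {..0})
     \<and> (\<forall>\<alpha>. \<alpha> * (c / \<nu>) > c / \<nu> - gp \<longrightarrow>
          (\<lambda>x. exp (- 2 * \<alpha> * (c / \<nu>) * x) * ((v1 x)\<^sup>2 + (v2 x)\<^sup>2)) integrable_on {0..})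
     \<and> (\<lambda>x. exp (- (c / \<nu>) * x) * ((v1 x)\<^sup>2 + (v2 x)\<^sup>2)) integrable_on UNIV"
proof -
  interpret tw \<nu> b a vs c f f1 f2 vh v1 v2
    by (unfold_locales) (use assms in auto)
  obtain Lm where rLm: "(r \<longlongrightarrow> Lm) at_bot" using r_lim_bot by blast
  obtain Lp where rLp: "(r \<longlongrightarrow> Lp) at_top" using r_lim_top by blast
  have rf: "(\<lambda>x. b / \<nu> * (f (vh x) / v1 x)) = r" by (rule ext) (simp add: r_def)
  have gmL: "gm = Lm" unfolding gm_def rf using INF_r[OF rLm] .
  have gpL: "gp = Lp" unfolding gp_def rf using SUP_r[OF rLp] .
  have gmv: "gm = c / (2 * \<nu>) - sqrt ((c / (2 * \<nu>))\<^sup>2 - b / \<nu> * f1 0)"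
    unfolding gmL by (rule Lm_val[OF rLm])
  have gpv: "gp = c / (2 * \<nu>) + sqrt ((c / (2 * \<nu>))\<^sup>2 - b / \<nu> * f1 1)"
    unfolding gpL by (rule Lp_val[OF rLp])
  have nb: "\<nu> / b > 0" using nu_pos b_pos by simp
  have c1: "\<forall>x. v1 x > 0" using v1_pos by blast
  have c2: "strict_mono (\<lambda>x. f (vh x) / v1 x)"
  proof (rule strict_monoI)
    fix x y :: real assume "x < y"
    then show "f (vh x) / v1 x < f (vh y) / v1 y"
    proof (rule DERIV_pos_imp_increasing)
      fix t assume "x \<le> t" "t \<le> y"
      show "\<exists>d. ((\<lambda>x. f (vh x) / v1 x) has_real_derivative d) (at t) \<and> d > 0"
        using q_deriv[of t] mult_pos_pos[OF nb w_pos[of t]] by blast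
    qed
  qed
  have c3: "\<forall>x. \<exists>D. D > 0
            \<and> ((\<lambda>y. f (vh y) / v1 y) has_real_derivative D) (at x)
            \<and> ((\<lambda>y. v2 y / v1 y) has_real_derivative (- (b / \<nu> * D))) (at x)"
  proof
    fix x
    have vr: "(\<lambda>y. v2 y / v1 y) = (\<lambda>y. kap - r y)"
    proof (rule ext)
      fix y
      have "v1 y \<noteq> 0" using v1_pos[of y] by simp
      then show "v2 y / v1 y = kap - r y" by (simp add: v2_r)
    qed
    have "((\<lambda>y. kap - r y) has_real_derivative - w x) (at x)"
      by (rule DERIV_diff[OF DERIV_const r_deriv, simplified])
    moreover have "- (b / \<nu> * (\<nu> / b * w x)) = - w x" using nu_pos b_pos by simp
    ultimately have "((\<lambda>y. v2 y / v1 y) has_real_derivative (- (b / \<nu> * (\<nu> / b * w x)))) (at x)"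
      unfolding vr by simp
    then show "\<exists>D. D > 0
            \<and> ((\<lambda>y. f (vh y) / v1 y) has_real_derivative D) (at x)
            \<and> ((\<lambda>y. v2 y / v1 y) has_real_derivative (- (b / \<nu> * D))) (at x)"
      using q_deriv[of x] mult_pos_pos[OF nb w_pos[of x]] by blast
  qed
  obtain R where R0: "R > 0" and R: "\<And>x. \<bar>r x\<bar> \<le> R" using r_bounds by blast
  have c4: "bdd_below (range (\<lambda>x. b / \<nu> * (f (vh x) / v1 x)))"
    unfolding rf by (rule bdd_belowI2[of _ "- R"]) (use R in \<open>metis abs_le_D2 minus_le_iff\<close>)
  have c5: "bdd_above (range (\<lambda>x. b / \<nu> * (f (vh x) / v1 x)))"
    unfolding rf by (rule bdd_aboveI2[of _ _ R]) (use R in \<open>metis abs_le_D1\<close>)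
  have c8: "\<forall>\<alpha>. \<alpha> * (c / \<nu>) < c / \<nu> - gm \<longrightarrow>
          (\<lambda>x. exp (- 2 * \<alpha> * (c / \<nu>) * x) * ((v1 x)\<^sup>2 + (v2 x)\<^sup>2)) integrable_on {..0}"
    using integ_left[OF rLm] unfolding gmL by blast
  have c9: "\<forall>\<alpha>. \<alpha> * (c / \<nu>) > c / \<nu> - gp \<longrightarrow>
          (\<lambda>x. exp (- 2 * \<alpha> * (c / \<nu>) * x) * ((v1 x)\<^sup>2 + (v2 x)\<^sup>2)) integrable_on {0..}"
    using integ_right[OF rLp] unfolding gpL by blast
  have S0: "sqrt ((c / (2 * \<nu>))\<^sup>2 - b / \<nu> * f1 0) > 0"
    using g0_neg zero_le_power2[of "c / (2 * \<nu>)"] by (intro real_sqrt_gt_zero) linarith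
  have S1: "sqrt ((c / (2 * \<nu>))\<^sup>2 - b / \<nu> * f1 1) > 0"
    using g1_neg zero_le_power2[of "c / (2 * \<nu>)"] by (intro real_sqrt_gt_zero) linarith
  have hc: "c / \<nu> = 2 * (c / (2 * \<nu>))" by simp
  have i1: "(\<lambda>x. exp (- 2 * (1/2) * (c / \<nu>) * x) * ((v1 x)\<^sup>2 + (v2 x)\<^sup>2)) integrable_on {..0}"
  proof -
    have h: "(1/2) * (c / \<nu>) = c / (2 * \<nu>)" by simp
    have "(1/2) * (c / \<nu>) < c / \<nu> - gm" using gmv S0 h hc by linarith
    then show ?thesis using c8 by blast
  qed
  have i2: "(\<lambda>x. exp (- 2 * (1/2) * (c / \<nu>) * x) * ((v1 x)\<^sup>2 + (v2 x)\<^sup>2)) integrable_on {0..}"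
  proof -
    have h: "(1/2) * (c / \<nu>) = c / (2 * \<nu>)" by simp
    have "(1/2) * (c / \<nu>) > c / \<nu> - gp" using gpv S1 h hc by linarith
    then show ?thesis using c9 by blast
  qed
  have ee: "(\<lambda>x. exp (- 2 * (1/2) * (c / \<nu>) * x) * ((v1 x)\<^sup>2 + (v2 x)\<^sup>2)) =
            (\<lambda>x. exp (- (c / \<nu>) * x) * ((v1 x)\<^sup>2 + (v2 x)\<^sup>2))" by simp
  have c10: "(\<lambda>x. exp (- (c / \<nu>) * x) * ((v1 x)\<^sup>2 + (v2 x)\<^sup>2)) integrable_on UNIV"
  proof (rule integrable_Un'[OF i1[unfolded ee] i2[unfolded ee]])
    have "{..0::real} \<inter> {0..} = {0}" by auto
    then show "negligible ({..0::real} \<inter> {0..})" by simp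
    show "UNIV = {..0::real} \<union> {0..}" by auto
  qed
  show ?thesis using c1 c2 c3 c4 c5 gmv gpv c8 c9 c10 by blast
qed

end
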